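(* Let $\alpha\in(0,1]$. For $x\geqslant1$ define the sequence $\{z_k(x)\}_{k\geqslant-1}$ by $z_{-1}(x)=1$, $z_0(x)=x$ and $$\alpha z_{k+1}-z_k+\frac1{z_k}+(1-\alpha)z_{k-1}-\frac1{z_{k-1}}=0\qquad(k\geqslant0).$$ Then for every $k\geqslant0$, $z_k(x)$ is well defined (i.e. no division by zero occurs) for all $x\geqslant1$, $z_k$ is a strictly increasing smooth function of $x$ on $[1,\infty)$, $z_k(1)=1$, and $z_k(x)\to\infty$ as $x\to\infty$. *)

theory Defs
  imports "HOL-Analysis.Analysis"
begin

text \<open>zpair a x k = (z_{k-1}(x), z_k(x)) for k >= 0, with z_{-1}(x) = 1, z_0(x) = x and
  a z_{k+1} - z_k + 1/z_k + (1-a) z_{k-1} - 1/z_{k-1} = 0 solved for z_{k+1}.\<close>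
fun zpair :: "real \<Rightarrow> real \<Rightarrow> nat \<Rightarrow> real \<times> real" where
  "zpair a x 0 = (1, x)"
| "zpair a x (Suc k) =
     (let (p, c) = zpair a x k in (c, (c - 1 / c - (1 - a) * p + 1 / p) / a))"

definition zs :: "real \<Rightarrow> real \<Rightarrow> nat \<Rightarrow> real" where
  "zs a x k = snd (zpair a x k)"

text \<open>Smoothness on a (possibly non-open) set S: f is infinitely differentiable on
  some open neighbourhood of S.\<close>
definition smooth_on :: "real set \<Rightarrow> (real \<Rightarrow> real) \<Rightarrow> bool" where
  "smooth_on S f \<longleftrightarrow>
     (\<exists>U. open U \<and> S \<subseteq> U \<and> (\<forall>n. \<forall>y\<in>U. (deriv ^^ n) f differentiable (at y)))"

end

theory Submission
  imports Defs
begin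

fun gz :: "real \<Rightarrow> nat \<Rightarrow> real \<Rightarrow> real" where
  "gz a 0 x = x"
| "gz a (Suc k) x = x + 1 + ((1 - a) * gz a k x - 1 / gz a k x) / a"

lemma zs_gz_aux:
  assumes "a \<noteq> 0"
  shows "fst (zpair a x (Suc k)) = gz a k x \<and> zs a x (Suc k) = gz a (Suc k) x"
proof (induction k)
  case 0
  show ?case using assms by (simp add: zs_def field_simps)
next
  case (Suc k)
  obtain p c where pc: "zpair a x (Suc k) = (p, c)" by (cases "zpair a x (Suc k)") auto
  have hp: "p = gz a k x" and hc: "c = gz a (Suc k) x"
    using Suc pc by (auto simp: zs_def)
  have e: "(1 - a) * p - 1 / p = a * (c - x - 1)"
    using hc hp assms by (simp add: field_simps)
  have "zs a x (Suc (Suc k)) = (c - 1 / c - (1 - a) * p + 1 / p) / a"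
    using pc by (simp add: zs_def)
  also have "\<dots> = (c - 1 / c - a * (c - x - 1)) / a" using e by (simp add: algebra_simps)
  also have "\<dots> = x + 1 + ((1 - a) * c - 1 / c) / a" using assms by (simp add: field_simps)
  also have "\<dots> = gz a (Suc (Suc k)) x" using hc by simp
  finally show ?case using pc hc by simp
qed

lemma zs_gz:
  assumes "a \<noteq> 0"
  shows "zs a x k = gz a k x"
  using zs_gz_aux[OF assms] by (cases k) (auto simp: zs_def)

lemma gz_ge:
  assumes "0 < a" "a \<le> 1" "1 \<le> x"
  shows "x \<le> gz a k x"
proof (induction k)
  case 0 then show ?case by simp
next
  case (Suc k)
  have g1: "1 \<le> gz a k x" using Suc assms by linarith
  have "(1 - a) * 1 \<le> (1 - a) * gz a k x" using g1 assms by (intro mult_left_mono) auto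
  moreover have "1 / gz a k x \<le> 1" using g1 by simp
  ultimately have "-a \<le> (1 - a) * gz a k x - 1 / gz a k x" by simp
  hence "-1 \<le> ((1 - a) * gz a k x - 1 / gz a k x) / a" using assms by (simp add: field_simps)
  then show ?case by simp
qed

lemma gz_one:
  assumes "0 < a"
  shows "gz a k 1 = 1"
  using assms by (induction k) (auto simp: field_simps)

lemma gz_mono:
  assumes "0 < a" "a \<le> 1" "1 \<le> x" "x < y"
  shows "gz a k x < gz a k y"
proof (induction k)
  case 0 then show ?case using assms by simp
next
  case (Suc k)
  have g1: "1 \<le> gz a k x" using gz_ge assms by (meson order_trans)
  have "(1 - a) * gz a k x \<le> (1 - a) * gz a k y" using Suc assms by (intro mult_left_mono) auto
  moreover have "1 / gz a k y \<le> 1 / gz a k x" using Suc g1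
    by (intro divide_left_mono) auto
  ultimately have "(1 - a) * gz a k x - 1 / gz a k x \<le> (1 - a) * gz a k y - 1 / gz a k y" by simp
  hence "((1 - a) * gz a k x - 1 / gz a k x) / a \<le> ((1 - a) * gz a k y - 1 / gz a k y) / a"
    using assms by (intro divide_right_mono) auto
  then show ?case using assms by simp
qed

inductive_set alg :: "real set \<Rightarrow> (real \<Rightarrow> real) set" for U where
  const: "(\<lambda>x. c) \<in> alg U"
| ident: "(\<lambda>x. x) \<in> alg U"
| inv: "f \<in> alg U \<Longrightarrow> (\<forall>x\<in>U. f x \<noteq> 0) \<Longrightarrow> (\<lambda>x. inverse (f x)) \<in> alg U"
| add: "f \<in> alg U \<Longrightarrow> g \<in> alg U \<Longrightarrow> (\<lambda>x. f x + g x) \<in> alg U"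
| mult: "f \<in> alg U \<Longrightarrow> g \<in> alg U \<Longrightarrow> (\<lambda>x. f x * g x) \<in> alg U"

lemma alg_anti:
  assumes "f \<in> alg U" "V \<subseteq> U"
  shows "f \<in> alg V"
  using assms by (induction rule: alg.induct) (auto intro: alg.intros)

lemma alg_deriv:
  assumes "f \<in> alg U"
  shows "\<exists>d\<in>alg U. \<forall>y\<in>U. (f has_real_derivative d y) (at y)"
  using assms
proof (induction rule: alg.induct)
  case (const c)
  show ?case by (rule bexI[of _ "\<lambda>x. 0"]) (auto intro: alg.intros)
next
  case ident
  show ?case by (rule bexI[of _ "\<lambda>x. 1"]) (auto intro: alg.intros)
next
  case (inv f)
  then obtain d where d: "d \<in> alg U" "\<forall>y\<in>U. (f has_real_derivative d y) (at y)" by blast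
  let ?e = "\<lambda>x. ((\<lambda>x. -1) x * d x) * ((\<lambda>x. inverse (f x)) x * (\<lambda>x. inverse (f x)) x)"
  have h1: "?e \<in> alg U"
    using d(1) inv by (intro alg.mult alg.const alg.inv) auto
  have h2: "\<forall>y\<in>U. ((\<lambda>x. inverse (f x)) has_real_derivative ?e y) (at y)"
  proof
    fix y assume y: "y \<in> U"
    have "((\<lambda>x. inverse (f x)) has_real_derivative - (d y * (inverse (f y) * inverse (f y)))) (at y)"
      using DERIV_inverse_fun[OF d(2)[rule_format, OF y]] inv y by auto
    then show "((\<lambda>x. inverse (f x)) has_real_derivative ?e y) (at y)"
      by (simp add: power2_eq_square field_simps)
  qed
  show ?case by (rule bexI[of _ ?e]) (use h1 h2 in auto)
next
  case (add f g)
  then obtain d e where "d \<in> alg U" "\<forall>y\<in>U. (f has_real_derivative d y) (at y)"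
    "e \<in> alg U" "\<forall>y\<in>U. (g has_real_derivative e y) (at y)" by blast
  then show ?case
    by (intro bexI[of _ "\<lambda>x. d x + e x"]) (auto intro: alg.intros derivative_intros)
next
  case (mult f g)
  then obtain d e where de: "d \<in> alg U" "\<forall>y\<in>U. (f has_real_derivative d y) (at y)"
    "e \<in> alg U" "\<forall>y\<in>U. (g has_real_derivative e y) (at y)" by blast
  have h1: "(\<lambda>x. d x * g x + f x * e x) \<in> alg U"
    using de mult by (intro alg.intros) auto
  have h2: "\<forall>y\<in>U. ((\<lambda>x. f x * g x) has_real_derivative d y * g y + f y * e y) (at y)"
  proof
    fix y assume "y \<in> U"
    then have "((\<lambda>x. f x * g x) has_real_derivative d y * g y + e y * f y) (at y)"
      using de by (intro DERIV_mult) auto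
    then show "((\<lambda>x. f x * g x) has_real_derivative d y * g y + f y * e y) (at y)"
      by (simp add: mult.commute)
  qed
  show ?case by (rule bexI[of _ "\<lambda>x. d x * g x + f x * e x"]) (use h1 h2 in auto)
qed

lemma alg_smooth:
  assumes "f \<in> alg U" "open U"
  shows "\<forall>n. \<forall>y\<in>U. (deriv ^^ n) f differentiable (at y)"
proof -
  have *: "\<exists>h\<in>alg U. \<forall>y\<in>U. (deriv ^^ n) f y = h y" for n
  proof (induction n)
    case 0 then show ?case using assms by auto
  next
    case (Suc n)
    then obtain h where h: "h \<in> alg U" "\<forall>y\<in>U. (deriv ^^ n) f y = h y" by blast
    obtain d where d: "d \<in> alg U" "\<forall>y\<in>U. (h has_real_derivative d y) (at y)"
      using alg_deriv[OF h(1)] by blast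
    have "\<forall>y\<in>U. (deriv ^^ Suc n) f y = d y"
    proof
      fix y assume y: "y \<in> U"
      have "((deriv ^^ n) f has_real_derivative d y) (at y)"
        using has_field_derivative_transform_within_open[OF d(2)[rule_format, OF y] assms(2) y] h(2)
        by auto
      then show "(deriv ^^ Suc n) f y = d y" by (simp add: DERIV_imp_deriv)
    qed
    then show ?case using d by blast
  qed
  show ?thesis
  proof (intro allI ballI)
    fix n y assume y: "y \<in> U"
    obtain h where h: "h \<in> alg U" "\<forall>y\<in>U. (deriv ^^ n) f y = h y" using * by blast
    obtain d where d: "d \<in> alg U" "\<forall>y\<in>U. (h has_real_derivative d y) (at y)"
      using alg_deriv[OF h(1)] by blast
    have "((deriv ^^ n) f has_real_derivative d y) (at y)"
      using has_field_derivative_transform_within_open[OF d(2)[rule_format, OF y] assms(2) y] h(2)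
      by auto
    then show "(deriv ^^ n) f differentiable (at y)"
      using real_differentiable_def by blast
  qed
qed

fun UU :: "real \<Rightarrow> nat \<Rightarrow> real set" where
  "UU a 0 = UNIV"
| "UU a (Suc k) = UU a k \<inter> {x. 0 < gz a k x}"

lemma gz_alg:
  assumes "0 < a" "a \<le> 1"
  shows "open (UU a k) \<and> {1..} \<subseteq> UU a k \<and> gz a k \<in> alg (UU a k)"
proof (induction k)
  case 0
  have "gz a 0 = (\<lambda>x. x)" by auto
  then show ?case by (auto intro: alg.intros)
next
  case (Suc k)
  let ?U = "UU a k"
  have o: "open ?U" and s: "{1..} \<subseteq> ?U" and g: "gz a k \<in> alg ?U" using Suc by auto
  have cont: "continuous_on ?U (gz a k)"
  proof (rule continuous_at_imp_continuous_on, rule ballI)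
    fix y assume "y \<in> ?U"
    then show "isCont (gz a k) y" using alg_deriv[OF g] DERIV_isCont by blast
  qed
  obtain A where A: "open A" "A \<inter> ?U = {x\<in>?U. (\<lambda>x. 0) x < gz a k x}"
    using open_Collect_less_Int[OF continuous_on_const cont] by blast
  have eqU: "UU a (Suc k) = A \<inter> ?U" using A(2) by auto
  have "open (UU a (Suc k))" unfolding eqU using A(1) o by auto
  moreover have "{1..} \<subseteq> UU a (Suc k)"
    using s gz_ge[OF assms] by (auto simp: subset_eq) (meson less_le_trans zero_less_one order_trans)
  moreover have "gz a (Suc k) \<in> alg (UU a (Suc k))"
  proof -
    have g': "gz a k \<in> alg (UU a (Suc k))" using alg_anti[OF g] by auto
    have "(\<lambda>x. ((\<lambda>x. x) x + (\<lambda>x. 1) x) + ((\<lambda>x. (1 - a) / a) x * gz a k x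
             + (\<lambda>x. - 1 / a) x * (\<lambda>x. inverse (gz a k x)) x)) \<in> alg (UU a (Suc k))"
      using g' by (intro alg.intros) auto
    moreover have "(\<lambda>x. ((\<lambda>x. x) x + (\<lambda>x. 1) x) + ((\<lambda>x. (1 - a) / a) x * gz a k x
             + (\<lambda>x. - 1 / a) x * (\<lambda>x. inverse (gz a k x)) x)) = gz a (Suc k)"
      using assms by (auto simp: field_simps fun_eq_iff)
    ultimately show ?thesis by simp
  qed
  ultimately show ?case by blast
qed

theorem lemma2:
  fixes a :: real
  assumes "0 < a" and "a \<le> 1"
  shows "\<forall>k::nat.
           (\<forall>x::real. x \<ge> 1 \<longrightarrow> zs a x k \<noteq> 0) \<and>
           strict_mono_on {1..} (\<lambda>x. zs a x k) \<and>
           smooth_on {1..} (\<lambda>x. zs a x k) \<and>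
           zs a 1 k = 1 \<and>
           filterlim (\<lambda>x. zs a x k) at_top at_top"
proof
  fix k
  have z: "(\<lambda>x. zs a x k) = gz a k" using zs_gz assms by (auto simp: fun_eq_iff)
  have A: "\<forall>x::real. x \<ge> 1 \<longrightarrow> zs a x k \<noteq> 0"
    using gz_ge[OF assms] z by (metis linorder_not_le not_one_le_zero order_trans)
  have B: "strict_mono_on {1..} (\<lambda>x. zs a x k)"
    unfolding z by (rule strict_mono_onI) (use gz_mono[OF assms] in auto)
  have C: "smooth_on {1..} (\<lambda>x. zs a x k)"
    unfolding z smooth_on_def using gz_alg[OF assms, of k] alg_smooth by blast
  have D: "zs a 1 k = 1" using z gz_one[OF assms(1)] by metis
  have E: "filterlim (\<lambda>x. zs a x k) at_top at_top"
    unfolding z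
  proof (rule filterlim_at_top_mono[OF filterlim_ident])
    show "\<forall>\<^sub>F x in at_top. x \<le> gz a k x"
      using eventually_ge_at_top[of "1::real"] by eventually_elim (use gz_ge[OF assms] in auto)
  qed
  show "(\<forall>x::real. x \<ge> 1 \<longrightarrow> zs a x k \<noteq> 0) \<and>
           strict_mono_on {1..} (\<lambda>x. zs a x k) \<and>
           smooth_on {1..} (\<lambda>x. zs a x k) \<and>
           zs a 1 k = 1 \<and>
           filterlim (\<lambda>x. zs a x k) at_top at_top" using A B C D E by blast
qed

end
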